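(* For every strategy profile $s$ with $S_0(s)\vee S_1(s)$: if $\mathsf{SAcBes}(s)$ then $\mathsf{SPE}(s)$.
   Context: Let $P=\{A,B\}$ and $\mathrm{Choice}=\{d,r\}$; a payoff function is $f:P\to\mathbb{R}$. Strategy profiles are elements of the final coalgebra of $X\mapsto\mathbb{R}^P+P\times\mathrm{Choice}\times X\times X$ (finite or infinite trees $\langle f\rangle$ or $\langle p,c,s_d,s_r\rangle$, equality being bisimilarity). The payoff $\widehat{s}$ is the partial function given by $\widehat{\langle f\rangle}=f$, $\widehat{\langle p,d,s_d,s_r\rangle}=\widehat{s_d}$, $\widehat{\langle p,r,s_d,s_r\rangle}=\widehat{s_r}$. Convergence $\downarrow$: least predicate with $\downarrow(s)$ iff $s=\langle f\rangle$, or $s=\langle p,d,s_d,s_r\rangle\wedge\downarrow(s_d)$, or $s=\langle p,r,s_d,s_r\rangle\wedge\downarrow(s_r)$. Strong convergence $\Downarrow$: greatest predicate with $\Downarrow(s)$ iff $s=\langle f\rangle$, or $s=\langle p,c,s_d,s_r\rangle$ with $\downarrow(s),\Downarrow(s_d),\Downarrow(s_r)$. For a predicate $\Phi$, $\Box\Phi$ is the greatest predicate such that $\Box\Phi(s)$ iff $\Phi(s)$ and, whenever $s=\langle p,c,s_d,s_r\rangle$, $\Box\Phi(s_d)$ and $\Box\Phi(s_r)$. $\mathsf{PE}(s)$ holds iff $\Downarrow(s)$ and (if $s=\langle p,d,s_d,s_r\rangle$ then $\widehat{s_d}(p)\ge\widehat{s_r}(p)$) and (if $s=\langle p,r,s_d,s_r\rangle$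 then $\widehat{s_r}(p)\ge\widehat{s_d}(p)$); subgame perfect equilibria are $\mathsf{SPE}=\Box\,\mathsf{PE}$. Let $f_{0,1}=(A\mapsto0,B\mapsto1)$, $f_{1,0}=(A\mapsto1,B\mapsto0)$. $S_0,S_1$ are the greatest predicates with $S_0(s)$ iff $s=\langle A,c,\langle f_{0,1}\rangle,s'\rangle$ with $S_1(s')$, and $S_1(s)$ iff $s=\langle B,c,\langle f_{1,0}\rangle,s'\rangle$ with $S_0(s')$. $\mathsf{AcBes}$ is the least predicate such that $\mathsf{AcBes}(s)$ holds iff: whenever $s=\langle p,c,\langle f\rangle,s'\rangle$, then ($p=A$, $f=f_{0,1}$, $c=r$, $\mathsf{AcBes}(s')$) or ($p=B$, $f=f_{1,0}$, and ($c=d$ or $\mathsf{AcBes}(s')$)). $\mathsf{SAcBes}=\Box\,\mathsf{AcBes}$. *)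

theory Defs
  imports Complex_Main
begin

datatype agent = A | B
datatype choice = cd | cr   (* cd = "d" (down), cr = "r" (right) *)

type_synonym payoff_fun = "agent \<Rightarrow> real"

(* final coalgebra of X \<mapsto> R^P + P \<times> Choice \<times> X \<times> X; HOL equality on a codatatype is bisimilarity *)
codatatype strat = Leaf payoff_fun | Node agent choice strat strat

partial_function (option) payoff :: "strat \<Rightarrow> payoff_fun option" where
  "payoff s = (case s of Leaf f \<Rightarrow> Some f
                | Node p c sd sr \<Rightarrow> (case c of cd \<Rightarrow> payoff sd | cr \<Rightarrow> payoff sr))"

inductive conv :: "strat \<Rightarrow> bool" where
  "(\<exists>f. s = Leaf f)
   \<or> (\<exists>p sd sr. s = Node p cd sd sr \<and> conv sd)
   \<or> (\<exists>p sd sr. s = Node p cr sd sr \<and> conv sr) \<Longrightarrow> conv s"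

coinductive sconv :: "strat \<Rightarrow> bool" where
  "(\<exists>f. s = Leaf f)
   \<or> (\<exists>p c sd sr. s = Node p c sd sr \<and> conv s \<and> sconv sd \<and> sconv sr) \<Longrightarrow> sconv s"

coinductive Box :: "(strat \<Rightarrow> bool) \<Rightarrow> strat \<Rightarrow> bool" for \<Phi> where
  "\<Phi> s \<Longrightarrow> (\<forall>p c sd sr. s = Node p c sd sr \<longrightarrow> Box \<Phi> sd \<and> Box \<Phi> sr) \<Longrightarrow> Box \<Phi> s"

definition PE :: "strat \<Rightarrow> bool" where
  "PE s \<longleftrightarrow> sconv s
     \<and> (\<forall>p sd sr. s = Node p cd sd sr \<longrightarrow> the (payoff sd) p \<ge> the (payoff sr) p)
     \<and> (\<forall>p sd sr. s = Node p cr sd sr \<longrightarrow> the (payoff sr) p \<ge> the (payoff sd) p)"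

definition SPE :: "strat \<Rightarrow> bool" where
  "SPE = Box PE"

definition f01 :: payoff_fun where "f01 = (\<lambda>x. case x of A \<Rightarrow> 0 | B \<Rightarrow> 1)"
definition f10 :: payoff_fun where "f10 = (\<lambda>x. case x of A \<Rightarrow> 1 | B \<Rightarrow> 0)"

coinductive S0 and S1 where
  "(\<exists>c s'. s = Node A c (Leaf f01) s' \<and> S1 s') \<Longrightarrow> S0 s"
| "(\<exists>c s'. s = Node B c (Leaf f10) s' \<and> S0 s') \<Longrightarrow> S1 s"

inductive AcBes :: "strat \<Rightarrow> bool" where
  "(\<forall>p c f s'. s = Node p c (Leaf f) s' \<longrightarrow>
      (p = A \<and> f = f01 \<and> c = cr \<and> AcBes s')
      \<or> (p = B \<and> f = f10 \<and> (c = cd \<or> AcBes s'))) \<Longrightarrow> AcBes s"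

definition SAcBes :: "strat \<Rightarrow> bool" where
  "SAcBes = Box AcBes"

end

theory Submission
  imports Defs
begin

lemma payoff_Leaf[simp]: "payoff (Leaf f) = Some f"
  by (subst payoff.simps) simp
lemma payoff_Node[simp]: "payoff (Node p c sd sr) = (case c of cd \<Rightarrow> payoff sd | cr \<Rightarrow> payoff sr)"
  by (subst payoff.simps) simp

lemma conv_Leaf: "conv (Leaf f)" by (rule conv.intros) simp
lemma conv_d: "conv sd \<Longrightarrow> conv (Node p cd sd sr)" by (rule conv.intros) simp
lemma conv_r: "conv sr \<Longrightarrow> conv (Node p cr sd sr)" by (rule conv.intros) simp

lemma key: "AcBes s \<Longrightarrow> (S0 s \<or> S1 s) \<longrightarrow> conv s \<and> payoff s = Some f10"
proof (induction rule: AcBes.induct)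
  case (1 s)
  show ?case
  proof
    assume "S0 s \<or> S1 s"
    then show "conv s \<and> payoff s = Some f10"
    proof
      assume "S0 s"
      then obtain c s' where s: "s = Node A c (Leaf f01) s'" and "S1 s'"
        by (cases rule: S0.cases) auto
      with 1 have "c = cr" "conv s' \<and> payoff s' = Some f10" by auto
      with s show ?thesis by (auto intro: conv_r)
    next
      assume "S1 s"
      then obtain c s' where s: "s = Node B c (Leaf f10) s'" and "S0 s'"
        by (cases rule: S1.cases) auto
      show ?thesis
      proof (cases c)
        case cd with s show ?thesis by (auto intro: conv_d conv_Leaf)
      next
        case cr
        with 1 s \<open>S0 s'\<close> have "conv s' \<and> payoff s' = Some f10" by auto
        with s cr show ?thesis by (auto intro: conv_r)
      qed
    qed
  qed
qed

lemma comb_cases: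
  assumes "S0 t \<or> S1 t"
  shows "\<exists>p c f t'. t = Node p c (Leaf f) t' \<and> (S0 t' \<or> S1 t') \<and>
     ((p = A \<and> f = f01) \<or> (p = B \<and> f = f10))"
  using assms by (auto elim: S0.cases S1.cases)

lemma box_node: "Box P (Node p c sd sr) \<Longrightarrow> P (Node p c sd sr) \<and> Box P sd \<and> Box P sr"
  by (erule Box.cases) auto

lemma sconv_comb:
  assumes "(S0 t \<or> S1 t) \<and> Box AcBes t \<or> (\<exists>f. t = Leaf f)"
  shows "sconv t"
  using assms
proof (coinduction arbitrary: t rule: sconv.coinduct)
  case (sconv t)
  then show ?case
  proof
    assume h: "(S0 t \<or> S1 t) \<and> Box AcBes t"
    then obtain p c f t' where t: "t = Node p c (Leaf f) t'" and t': "S0 t' \<or> S1 t'"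
      using comb_cases by blast
    from h t have "AcBes t" "Box AcBes t'" using box_node by blast+
    with h key have "conv t" by blast
    with t t' \<open>Box AcBes t'\<close> show ?thesis by auto
  qed auto
qed

lemma sconv_Leaf: "sconv (Leaf f)" by (rule sconv_comb) simp

lemma PE_Leaf: "PE (Leaf f)" unfolding PE_def by (simp add: sconv_Leaf)

lemma BoxPE_Leaf: "Box PE (Leaf f)" by (rule Box.intros) (auto simp: PE_Leaf)

theorem mainTheorem9:
  fixes s :: strat
  assumes "S0 s \<or> S1 s"
    and "SAcBes s"
  shows "SPE s"
  unfolding SPE_def
  using assms(1) assms(2)[unfolded SAcBes_def]
proof (coinduction arbitrary: s rule: Box.coinduct)
  case (Box s)
  then obtain p c f t' where t: "s = Node p c (Leaf f) t'" and t': "S0 t' \<or> S1 t'"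
     and pf: "(p = A \<and> f = f01) \<or> (p = B \<and> f = f10)"
    using comb_cases by blast
  from Box t have ab: "AcBes s" "Box AcBes t'" using box_node by blast+
  from ab(2) have "AcBes t'" by (cases rule: Box.cases) auto
  with t' have pt: "payoff t' = Some f10" using key by blast
  have sc: "sconv s" using sconv_comb Box by blast
  have abs: "AcBes s" by fact
  then have "(p = A \<and> f = f01 \<and> c = cr) \<or> (p = B \<and> f = f10)"
    using t by (cases rule: AcBes.cases) auto
  then have pe: "PE s"
    unfolding PE_def using sc t pt
    by (cases c) (auto simp: f01_def f10_def)
  have "PE (Leaf f)" unfolding PE_def by (simp add: sconv_Leaf)
  then show ?case using pe t t' ab(2) BoxPE_Leaf by auto
qed

end
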